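(* Let $\mathcal C$ be a small strict 2-category. The assignment ${\rm i}\colon \operatorname{Tr}(\mathcal C)\to\operatorname{Tr}_{hor}(\mathcal C)$ given on objects by ${\rm i}(x)=(1_x\colon x\to x)$ and on morphisms by ${\rm i}([\sigma])=[f,\sigma]$ for a 2-endomorphism $\sigma\colon f\Rightarrow f$ of a 1-morphism $f\colon x\to y$ (viewing $\sigma$ as a 2-morphism $f\circ 1_x\Rightarrow 1_y\circ f$) is a well-defined functor which is full and faithful.
   Context: For a small category $\mathcal A$, $\operatorname{Tr}(\mathcal A)$ is the set of endomorphisms of $\mathcal A$ modulo the equivalence relation generated by $fg\sim gf$ for $f\colon x\to y$, $g\colon y\to x$. For a strict 2-category $\mathcal C$, the category $\operatorname{Tr}(\mathcal C)$ has the same objects as $\mathcal C$, hom-sets $\operatorname{Tr}(\mathcal C)(x,y)=\operatorname{Tr}(\mathcal C(x,y))$ (trace of the hom-category), composition $[\tau]\circ[\sigma]=[\tau\circ\sigma]$ (horizontal composition) and identities $[1_{1_x}]$. The horizontal trace $\operatorname{Tr}_{hor}(\mathcal C)$ is the category whose objects are 1-endomorphisms $f\colon x\to x$, $x\in\operatorname{Ob}(\mathcal C)$; a morphism from $f\colon x\to x$ to $g\colon y\to y$ is an equivalence class $[p,\sigma]$ of pairs consisting of a 1-morphism $p\colon x\to y$ and a 2-morphism $\sigma\colon p\circ f\Rightarrow g\circ p$, where the equivalence relation is generated by $(p,(g\circ\tau)\sigma)\sim(p',\sigma(\tau\circ f))$ for all $p,p'\colon x\to y$, $\sigma\colon p\circ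 f\Rightarrow g\circ p'$, $\tau\colon p'\Rightarrow p$. Composition is $[q,\tau][p,\sigma]=[qp,(\tau\circ p)(q\circ\sigma)]$ and identities are $[1_x,1_f]$. *)

theory Defs
  imports Main
begin

text \<open>Conventions:
  comp1 g f = g \<circ> f  (f first);  vcomp \<tau> \<sigma> = \<tau>\<sigma>  (\<sigma> first, vertical);
  hcomp \<tau> \<sigma> = \<tau> \<circ> \<sigma>  (horizontal; \<sigma> lives over x\<rightarrow>y, \<tau> over y\<rightarrow>z).\<close>

record ('o, 'a, 'b) two_cat =
  Ob    :: "'o set"
  Arr   :: "'a set"
  Cell  :: "'b set"
  dom1  :: "'a \<Rightarrow> 'o"
  cod1  :: "'a \<Rightarrow> 'o"
  id1   :: "'o \<Rightarrow> 'a"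
  comp1 :: "'a \<Rightarrow> 'a \<Rightarrow> 'a"
  src2  :: "'b \<Rightarrow> 'a"
  tgt2  :: "'b \<Rightarrow> 'a"
  id2   :: "'a \<Rightarrow> 'b"
  vcomp :: "'b \<Rightarrow> 'b \<Rightarrow> 'b"
  hcomp :: "'b \<Rightarrow> 'b \<Rightarrow> 'b"

definition strict_2cat :: "('o, 'a, 'b) two_cat \<Rightarrow> bool" where
  "strict_2cat C \<longleftrightarrow>
    \<comment> \<open>underlying 1-category\<close>
    (\<forall>f\<in>Arr C. dom1 C f \<in> Ob C \<and> cod1 C f \<in> Ob C) \<and>
    (\<forall>x\<in>Ob C. id1 C x \<in> Arr C \<and> dom1 C (id1 C x) = x \<and> cod1 C (id1 C x) = x) \<and>
    (\<forall>f\<in>Arr C. \<forall>g\<in>Arr C. cod1 C f = dom1 C g \<longrightarrow>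
        comp1 C g f \<in> Arr C \<and> dom1 C (comp1 C g f) = dom1 C f \<and> cod1 C (comp1 C g f) = cod1 C g) \<and>
    (\<forall>f\<in>Arr C. \<forall>g\<in>Arr C. \<forall>h\<in>Arr C. cod1 C f = dom1 C g \<longrightarrow> cod1 C g = dom1 C h \<longrightarrow>
        comp1 C h (comp1 C g f) = comp1 C (comp1 C h g) f) \<and>
    (\<forall>f\<in>Arr C. comp1 C f (id1 C (dom1 C f)) = f \<and> comp1 C (id1 C (cod1 C f)) f = f) \<and>
    \<comment> \<open>2-cells are parallel\<close>
    (\<forall>\<sigma>\<in>Cell C. src2 C \<sigma> \<in> Arr C \<and> tgt2 C \<sigma> \<in> Arr C \<and>
        dom1 C (src2 C \<sigma>) = dom1 C (tgt2 C \<sigma>) \<and> cod1 C (src2 C \<sigma>) = cod1 C (tgt2 C \<sigma>)) \<and>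
    \<comment> \<open>vertical category structure on each hom\<close>
    (\<forall>f\<in>Arr C. id2 C f \<in> Cell C \<and> src2 C (id2 C f) = f \<and> tgt2 C (id2 C f) = f) \<and>
    (\<forall>\<sigma>\<in>Cell C. \<forall>\<tau>\<in>Cell C. tgt2 C \<sigma> = src2 C \<tau> \<longrightarrow>
        vcomp C \<tau> \<sigma> \<in> Cell C \<and> src2 C (vcomp C \<tau> \<sigma>) = src2 C \<sigma> \<and> tgt2 C (vcomp C \<tau> \<sigma>) = tgt2 C \<tau>) \<and>
    (\<forall>\<sigma>\<in>Cell C. \<forall>\<tau>\<in>Cell C. \<forall>\<rho>\<in>Cell C. tgt2 C \<sigma> = src2 C \<tau> \<longrightarrow> tgt2 C \<tau> = src2 C \<rho> \<longrightarrow>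
        vcomp C \<rho> (vcomp C \<tau> \<sigma>) = vcomp C (vcomp C \<rho> \<tau>) \<sigma>) \<and>
    (\<forall>\<sigma>\<in>Cell C. vcomp C \<sigma> (id2 C (src2 C \<sigma>)) = \<sigma> \<and> vcomp C (id2 C (tgt2 C \<sigma>)) \<sigma> = \<sigma>) \<and>
    \<comment> \<open>horizontal composition is a functor\<close>
    (\<forall>\<sigma>\<in>Cell C. \<forall>\<tau>\<in>Cell C. cod1 C (src2 C \<sigma>) = dom1 C (src2 C \<tau>) \<longrightarrow>
        hcomp C \<tau> \<sigma> \<in> Cell C \<and> src2 C (hcomp C \<tau> \<sigma>) = comp1 C (src2 C \<tau>) (src2 C \<sigma>) \<and>
        tgt2 C (hcomp C \<tau> \<sigma>) = comp1 C (tgt2 C \<tau>) (tgt2 C \<sigma>)) \<and>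
    (\<forall>f\<in>Arr C. \<forall>g\<in>Arr C. cod1 C f = dom1 C g \<longrightarrow>
        hcomp C (id2 C g) (id2 C f) = id2 C (comp1 C g f)) \<and>
    (\<forall>\<sigma>\<in>Cell C. \<forall>\<sigma>'\<in>Cell C. \<forall>\<tau>\<in>Cell C. \<forall>\<tau>'\<in>Cell C.
        tgt2 C \<sigma> = src2 C \<sigma>' \<longrightarrow> tgt2 C \<tau> = src2 C \<tau>' \<longrightarrow> cod1 C (src2 C \<sigma>) = dom1 C (src2 C \<tau>) \<longrightarrow>
        hcomp C (vcomp C \<tau>' \<tau>) (vcomp C \<sigma>' \<sigma>) = vcomp C (hcomp C \<tau>' \<sigma>') (hcomp C \<tau> \<sigma>)) \<and>
    \<comment> \<open>strict associativity and unitality of horizontal composition\<close>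
    (\<forall>\<sigma>\<in>Cell C. \<forall>\<tau>\<in>Cell C. \<forall>\<rho>\<in>Cell C.
        cod1 C (src2 C \<sigma>) = dom1 C (src2 C \<tau>) \<longrightarrow> cod1 C (src2 C \<tau>) = dom1 C (src2 C \<rho>) \<longrightarrow>
        hcomp C \<rho> (hcomp C \<tau> \<sigma>) = hcomp C (hcomp C \<rho> \<tau>) \<sigma>) \<and>
    (\<forall>\<sigma>\<in>Cell C. hcomp C \<sigma> (id2 C (id1 C (dom1 C (src2 C \<sigma>)))) = \<sigma> \<and>
                 hcomp C (id2 C (id1 C (cod1 C (src2 C \<sigma>)))) \<sigma> = \<sigma>)"

definition equiv_gen :: "'x set \<Rightarrow> ('x \<times> 'x) set \<Rightarrow> ('x \<times> 'x) set" where
  "equiv_gen A R = \<Inter> {S. equiv A S \<and> R \<subseteq> S}"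

definition endo2 :: "('o,'a,'b) two_cat \<Rightarrow> 'o \<Rightarrow> 'o \<Rightarrow> 'b set" where
  "endo2 C x y = {\<sigma> \<in> Cell C. src2 C \<sigma> = tgt2 C \<sigma> \<and> dom1 C (src2 C \<sigma>) = x \<and> cod1 C (src2 C \<sigma>) = y}"

definition tr_gen :: "('o,'a,'b) two_cat \<Rightarrow> 'o \<Rightarrow> 'o \<Rightarrow> ('b \<times> 'b) set" where
  "tr_gen C x y = {(vcomp C g f, vcomp C f g) | f g. f \<in> Cell C \<and> g \<in> Cell C \<and>
      tgt2 C f = src2 C g \<and> tgt2 C g = src2 C f \<and> dom1 C (src2 C f) = x \<and> cod1 C (src2 C f) = y}"

definition trrel :: "('o,'a,'b) two_cat \<Rightarrow> 'o \<Rightarrow> 'o \<Rightarrow> ('b \<times> 'b) set" where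
  "trrel C x y = equiv_gen (endo2 C x y) (tr_gen C x y)"

definition tr_class :: "('o,'a,'b) two_cat \<Rightarrow> 'o \<Rightarrow> 'o \<Rightarrow> 'b \<Rightarrow> 'b set" where
  "tr_class C x y \<sigma> = trrel C x y `` {\<sigma>}"

definition tr_hom :: "('o,'a,'b) two_cat \<Rightarrow> 'o \<Rightarrow> 'o \<Rightarrow> 'b set set" where
  "tr_hom C x y = endo2 C x y // trrel C x y"

definition tr_comp :: "('o,'a,'b) two_cat \<Rightarrow> 'o \<Rightarrow> 'o \<Rightarrow> 'o \<Rightarrow> 'b set \<Rightarrow> 'b set \<Rightarrow> 'b set" where
  "tr_comp C x y z T S = tr_class C x z (hcomp C (SOME \<tau>. \<tau> \<in> T) (SOME \<sigma>. \<sigma> \<in> S))"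

definition tr_id :: "('o,'a,'b) two_cat \<Rightarrow> 'o \<Rightarrow> 'b set" where
  "tr_id C x = tr_class C x x (id2 C (id1 C x))"

definition hor_obj :: "('o,'a,'b) two_cat \<Rightarrow> 'a \<Rightarrow> bool" where
  "hor_obj C f \<longleftrightarrow> f \<in> Arr C \<and> dom1 C f = cod1 C f"

definition hor_pairs :: "('o,'a,'b) two_cat \<Rightarrow> 'a \<Rightarrow> 'a \<Rightarrow> ('a \<times> 'b) set" where
  "hor_pairs C f g = {(p, \<sigma>). p \<in> Arr C \<and> dom1 C p = dom1 C f \<and> cod1 C p = dom1 C g \<and>
      \<sigma> \<in> Cell C \<and> src2 C \<sigma> = comp1 C p f \<and> tgt2 C \<sigma> = comp1 C g p}"

definition hor_gen :: "('o,'a,'b) two_cat \<Rightarrow> 'a \<Rightarrow> 'a \<Rightarrow> (('a \<times> 'b) \<times> ('a \<times> 'b)) set" where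
  "hor_gen C f g = {((p, vcomp C (hcomp C (id2 C g) \<tau>) \<sigma>), (p', vcomp C \<sigma> (hcomp C \<tau> (id2 C f)))) | p p' \<sigma> \<tau>.
      p \<in> Arr C \<and> p' \<in> Arr C \<and> dom1 C p = dom1 C f \<and> cod1 C p = dom1 C g \<and>
      dom1 C p' = dom1 C f \<and> cod1 C p' = dom1 C g \<and>
      \<sigma> \<in> Cell C \<and> src2 C \<sigma> = comp1 C p f \<and> tgt2 C \<sigma> = comp1 C g p' \<and>
      \<tau> \<in> Cell C \<and> src2 C \<tau> = p' \<and> tgt2 C \<tau> = p}"

definition horrel :: "('o,'a,'b) two_cat \<Rightarrow> 'a \<Rightarrow> 'a \<Rightarrow> (('a \<times> 'b) \<times> ('a \<times> 'b)) set" where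
  "horrel C f g = equiv_gen (hor_pairs C f g) (hor_gen C f g)"

definition hor_class :: "('o,'a,'b) two_cat \<Rightarrow> 'a \<Rightarrow> 'a \<Rightarrow> 'a \<times> 'b \<Rightarrow> ('a \<times> 'b) set" where
  "hor_class C f g pa = horrel C f g `` {pa}"

definition hor_hom :: "('o,'a,'b) two_cat \<Rightarrow> 'a \<Rightarrow> 'a \<Rightarrow> ('a \<times> 'b) set set" where
  "hor_hom C f g = hor_pairs C f g // horrel C f g"

definition hor_comp :: "('o,'a,'b) two_cat \<Rightarrow> 'a \<Rightarrow> 'a \<Rightarrow> 'a \<Rightarrow> ('a \<times> 'b) set \<Rightarrow> ('a \<times> 'b) set \<Rightarrow> ('a \<times> 'b) set" where
  "hor_comp C f g h B A =
     (let (q, \<tau>) = (SOME b. b \<in> B); (p, \<sigma>) = (SOME a. a \<in> A)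
      in hor_class C f h (comp1 C q p, vcomp C (hcomp C \<tau> (id2 C p)) (hcomp C (id2 C q) \<sigma>)))"

definition hor_id :: "('o,'a,'b) two_cat \<Rightarrow> 'a \<Rightarrow> ('a \<times> 'b) set" where
  "hor_id C f = hor_class C f f (id1 C (dom1 C f), id2 C f)"

definition i_obj :: "('o,'a,'b) two_cat \<Rightarrow> 'o \<Rightarrow> 'a" where
  "i_obj C x = id1 C x"

definition i_rep :: "('o,'a,'b) two_cat \<Rightarrow> 'o \<Rightarrow> 'o \<Rightarrow> 'b \<Rightarrow> ('a \<times> 'b) set" where
  "i_rep C x y \<sigma> = hor_class C (id1 C x) (id1 C y) (src2 C \<sigma>, \<sigma>)"

definition i_mor :: "('o,'a,'b) two_cat \<Rightarrow> 'o \<Rightarrow> 'o \<Rightarrow> 'b set \<Rightarrow> ('a \<times> 'b) set" where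
  "i_mor C x y S = i_rep C x y (SOME \<sigma>. \<sigma> \<in> S)"

end

theory Submission
  imports Defs
begin


lemma equiv_gen_equiv: assumes "R \<subseteq> A \<times> A" shows "equiv A (equiv_gen A R)"
proof -
  let ?F = "{S. equiv A S \<and> R \<subseteq> S}"
  have ne: "A \<times> A \<in> ?F" using assms
    by (auto simp: equiv_def refl_on_def sym_def trans_def)
  have 1: "\<Inter> ?F \<subseteq> A \<times> A" using ne by blast
  have 2: "refl_on A (\<Inter> ?F)" unfolding refl_on_def
  proof (intro ballI InterI)
    fix x S assume "x \<in> A" "S \<in> ?F"
    thus "(x,x) \<in> S" by (auto simp: equiv_def refl_on_def)
  qed
  have 3: "sym (\<Inter> ?F)"
  proof (rule symI, rule InterI)
    fix x y S assume "(x,y) \<in> \<Inter> ?F" "S \<in> ?F"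
    hence "(x,y) \<in> S" "sym S" by (auto simp: equiv_def)
    thus "(y,x) \<in> S" by (rule symD[rotated])
  qed
  have 4: "trans (\<Inter> ?F)"
  proof (rule transI, rule InterI)
    fix x y z S assume "(x,y) \<in> \<Inter> ?F" "(y,z) \<in> \<Inter> ?F" "S \<in> ?F"
    hence "(x,y) \<in> S" "(y,z) \<in> S" "trans S" by (auto simp: equiv_def)
    thus "(x,z) \<in> S" by (meson transD)
  qed
  show ?thesis unfolding equiv_gen_def using 1 2 3 4 by (rule equivI)
qed

lemma equiv_gen_sub: "R \<subseteq> equiv_gen A R"
  unfolding equiv_gen_def by blast

lemma equiv_gen_least: "equiv A S \<Longrightarrow> R \<subseteq> S \<Longrightarrow> equiv_gen A R \<subseteq> S"
  unfolding equiv_gen_def by blast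

lemma equiv_gen_map:
  assumes "R \<subseteq> A \<times> A" "equiv B S" "\<And>a. a \<in> A \<Longrightarrow> h a \<in> B"
    "\<And>a b. (a, b) \<in> R \<Longrightarrow> (h a, h b) \<in> S" "(a, b) \<in> equiv_gen A R"
  shows "(h a, h b) \<in> S"
proof -
  let ?S = "{(a,b). a\<in>A \<and> b\<in>A \<and> (h a, h b) \<in> S}"
  have "equiv A ?S" using assms(2,3)
    unfolding equiv_def refl_on_def sym_def trans_def by blast
  moreover have "R \<subseteq> ?S" using assms(1,4) by blast
  ultimately show ?thesis using equiv_gen_least[of A ?S R] assms(5) by blast
qed

context
  fixes C :: "('o, 'a, 'b) two_cat"
  assumes C: "strict_2cat C"
begin

lemma arr_ob: "f \<in> Arr C \<Longrightarrow> dom1 C f \<in> Ob C \<and> cod1 C f \<in> Ob C"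
  using C[unfolded strict_2cat_def, THEN conjunct1] by blast
lemma id1_props: "x \<in> Ob C \<Longrightarrow> id1 C x \<in> Arr C \<and> dom1 C (id1 C x) = x \<and> cod1 C (id1 C x) = x"
  using C[unfolded strict_2cat_def, THEN conjunct2, THEN conjunct1] by blast
lemma comp1_props: "f \<in> Arr C \<Longrightarrow> g \<in> Arr C \<Longrightarrow> cod1 C f = dom1 C g \<Longrightarrow>
    comp1 C g f \<in> Arr C \<and> dom1 C (comp1 C g f) = dom1 C f \<and> cod1 C (comp1 C g f) = cod1 C g"
  using C[unfolded strict_2cat_def, THEN conjunct2, THEN conjunct2, THEN conjunct1] by blast
lemma comp1_id: "f \<in> Arr C \<Longrightarrow> comp1 C f (id1 C (dom1 C f)) = f \<and> comp1 C (id1 C (cod1 C f)) f = f"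
  using C[unfolded strict_2cat_def, THEN conjunct2, THEN conjunct2, THEN conjunct2, THEN conjunct2, THEN conjunct1] by blast
lemma cell_props: "\<sigma> \<in> Cell C \<Longrightarrow> src2 C \<sigma> \<in> Arr C \<and> tgt2 C \<sigma> \<in> Arr C \<and>
        dom1 C (src2 C \<sigma>) = dom1 C (tgt2 C \<sigma>) \<and> cod1 C (src2 C \<sigma>) = cod1 C (tgt2 C \<sigma>)"
  using C[unfolded strict_2cat_def, THEN conjunct2, THEN conjunct2, THEN conjunct2, THEN conjunct2, THEN conjunct2, THEN conjunct1] by blast
lemma id2_props: "f \<in> Arr C \<Longrightarrow> id2 C f \<in> Cell C \<and> src2 C (id2 C f) = f \<and> tgt2 C (id2 C f) = f"
  using C[unfolded strict_2cat_def, THEN conjunct2, THEN conjunct2, THEN conjunct2, THEN conjunct2, THEN conjunct2, THEN conjunct2, THEN conjunct1] by blast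
lemma vcomp_props: "\<sigma> \<in> Cell C \<Longrightarrow> \<tau> \<in> Cell C \<Longrightarrow> tgt2 C \<sigma> = src2 C \<tau> \<Longrightarrow>
        vcomp C \<tau> \<sigma> \<in> Cell C \<and> src2 C (vcomp C \<tau> \<sigma>) = src2 C \<sigma> \<and> tgt2 C (vcomp C \<tau> \<sigma>) = tgt2 C \<tau>"
  using C[unfolded strict_2cat_def, THEN conjunct2, THEN conjunct2, THEN conjunct2, THEN conjunct2, THEN conjunct2, THEN conjunct2, THEN conjunct2, THEN conjunct1] by blast
lemma vcomp_id: "\<sigma> \<in> Cell C \<Longrightarrow> vcomp C \<sigma> (id2 C (src2 C \<sigma>)) = \<sigma> \<and> vcomp C (id2 C (tgt2 C \<sigma>)) \<sigma> = \<sigma>"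
  using C[unfolded strict_2cat_def, THEN conjunct2, THEN conjunct2, THEN conjunct2, THEN conjunct2, THEN conjunct2, THEN conjunct2, THEN conjunct2, THEN conjunct2, THEN conjunct2, THEN conjunct1] by blast
lemma hcomp_props: "\<sigma> \<in> Cell C \<Longrightarrow> \<tau> \<in> Cell C \<Longrightarrow> cod1 C (src2 C \<sigma>) = dom1 C (src2 C \<tau>) \<Longrightarrow>
        hcomp C \<tau> \<sigma> \<in> Cell C \<and> src2 C (hcomp C \<tau> \<sigma>) = comp1 C (src2 C \<tau>) (src2 C \<sigma>) \<and>
        tgt2 C (hcomp C \<tau> \<sigma>) = comp1 C (tgt2 C \<tau>) (tgt2 C \<sigma>)"
  using C[unfolded strict_2cat_def, THEN conjunct2, THEN conjunct2, THEN conjunct2, THEN conjunct2, THEN conjunct2, THEN conjunct2, THEN conjunct2, THEN conjunct2, THEN conjunct2, THEN conjunct2, THEN conjunct1] by blast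
lemma interchange: "\<sigma> \<in> Cell C \<Longrightarrow> \<sigma>' \<in> Cell C \<Longrightarrow> \<tau> \<in> Cell C \<Longrightarrow> \<tau>' \<in> Cell C \<Longrightarrow>
        tgt2 C \<sigma> = src2 C \<sigma>' \<Longrightarrow> tgt2 C \<tau> = src2 C \<tau>' \<Longrightarrow> cod1 C (src2 C \<sigma>) = dom1 C (src2 C \<tau>) \<Longrightarrow>
        hcomp C (vcomp C \<tau>' \<tau>) (vcomp C \<sigma>' \<sigma>) = vcomp C (hcomp C \<tau>' \<sigma>') (hcomp C \<tau> \<sigma>)"
  using C[unfolded strict_2cat_def, THEN conjunct2, THEN conjunct2, THEN conjunct2, THEN conjunct2, THEN conjunct2, THEN conjunct2, THEN conjunct2, THEN conjunct2, THEN conjunct2, THEN conjunct2, THEN conjunct2, THEN conjunct2, THEN conjunct1] by blast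
lemma hcomp_unit: "\<sigma> \<in> Cell C \<Longrightarrow> hcomp C \<sigma> (id2 C (id1 C (dom1 C (src2 C \<sigma>)))) = \<sigma> \<and>
                 hcomp C (id2 C (id1 C (cod1 C (src2 C \<sigma>)))) \<sigma> = \<sigma>"
  using C[unfolded strict_2cat_def, THEN conjunct2, THEN conjunct2, THEN conjunct2, THEN conjunct2, THEN conjunct2, THEN conjunct2, THEN conjunct2, THEN conjunct2, THEN conjunct2, THEN conjunct2, THEN conjunct2, THEN conjunct2, THEN conjunct2, THEN conjunct2] by blast

lemma endo2_iff: "\<sigma> \<in> endo2 C x y \<longleftrightarrow> \<sigma> \<in> Cell C \<and> src2 C \<sigma> = tgt2 C \<sigma> \<and> dom1 C (src2 C \<sigma>) = x \<and> cod1 C (src2 C \<sigma>) = y"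
  unfolding endo2_def by blast

lemma tr_gen_sub: "tr_gen C x y \<subseteq> endo2 C x y \<times> endo2 C x y"
proof
  fix z assume "z \<in> tr_gen C x y"
  then obtain f g where z: "z = (vcomp C g f, vcomp C f g)" and h: "f \<in> Cell C" "g \<in> Cell C"
      "tgt2 C f = src2 C g" "tgt2 C g = src2 C f" "dom1 C (src2 C f) = x" "cod1 C (src2 C f) = y"
    unfolding tr_gen_def by blast
  have "dom1 C (src2 C g) = x" "cod1 C (src2 C g) = y" using h cell_props[of f] by metis+
  thus "z \<in> endo2 C x y \<times> endo2 C x y" using z h vcomp_props[of f g] vcomp_props[of g f]
    by (simp add: endo2_iff)
qed

lemma trrel_equiv: "equiv (endo2 C x y) (trrel C x y)"
  unfolding trrel_def by (rule equiv_gen_equiv[OF tr_gen_sub])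

lemma hor_pairs_iff: assumes "x \<in> Ob C" "y \<in> Ob C"
  shows "(p, \<sigma>) \<in> hor_pairs C (id1 C x) (id1 C y) \<longleftrightarrow> \<sigma> \<in> endo2 C x y \<and> p = src2 C \<sigma>"
proof
  assume "(p, \<sigma>) \<in> hor_pairs C (id1 C x) (id1 C y)"
  hence h: "p \<in> Arr C" "dom1 C p = x" "cod1 C p = y" "\<sigma> \<in> Cell C"
     "src2 C \<sigma> = comp1 C p (id1 C x)" "tgt2 C \<sigma> = comp1 C (id1 C y) p"
    unfolding hor_pairs_def using id1_props assms by auto
  have "comp1 C p (id1 C x) = p" "comp1 C (id1 C y) p = p" using comp1_id[OF h(1)] h by auto
  thus "\<sigma> \<in> endo2 C x y \<and> p = src2 C \<sigma>" using h by (simp add: endo2_iff)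
next
  assume h: "\<sigma> \<in> endo2 C x y \<and> p = src2 C \<sigma>"
  hence p: "p \<in> Arr C" using cell_props by (auto simp: endo2_iff)
  have "comp1 C p (id1 C x) = p" "comp1 C (id1 C y) p = p" using comp1_id[OF p] h by (auto simp: endo2_iff)
  thus "(p, \<sigma>) \<in> hor_pairs C (id1 C x) (id1 C y)" unfolding hor_pairs_def
    using h p id1_props assms by (auto simp: endo2_iff)
qed

lemma hor_gen_char: assumes "x \<in> Ob C" "y \<in> Ob C"
  shows "hor_gen C (id1 C x) (id1 C y) =
    {((src2 C \<sigma>, vcomp C \<tau> \<sigma>), (src2 C \<tau>, vcomp C \<sigma> \<tau>)) | \<sigma> \<tau>. (vcomp C \<tau> \<sigma>, vcomp C \<sigma> \<tau>) \<in> tr_gen C x y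
       \<and> \<sigma> \<in> Cell C \<and> \<tau> \<in> Cell C \<and> tgt2 C \<sigma> = src2 C \<tau> \<and> tgt2 C \<tau> = src2 C \<sigma> \<and> dom1 C (src2 C \<sigma>) = x \<and> cod1 C (src2 C \<sigma>) = y}"
  (is "?L = ?R")
proof
  have ix: "dom1 C (id1 C x) = x" and iy: "dom1 C (id1 C y) = y" using id1_props assms by auto
  show "?L \<subseteq> ?R"
  proof
    fix z assume "z \<in> ?L"
    then obtain p p' \<sigma> \<tau> where z: "z = ((p, vcomp C (hcomp C (id2 C (id1 C y)) \<tau>) \<sigma>), (p', vcomp C \<sigma> (hcomp C \<tau> (id2 C (id1 C x)))))"
      and h: "p \<in> Arr C" "p' \<in> Arr C" "dom1 C p = x" "cod1 C p = y" "dom1 C p' = x" "cod1 C p' = y"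
      "\<sigma> \<in> Cell C" "src2 C \<sigma> = comp1 C p (id1 C x)" "tgt2 C \<sigma> = comp1 C (id1 C y) p'"
      "\<tau> \<in> Cell C" "src2 C \<tau> = p'" "tgt2 C \<tau> = p"
      unfolding hor_gen_def ix iy by blast
    have c1: "comp1 C p (id1 C x) = p" using comp1_id[OF h(1)] h(3) by simp
    have c2: "comp1 C (id1 C y) p' = p'" using comp1_id[OF h(2)] h(6) by simp
    have s: "src2 C \<sigma> = p" "tgt2 C \<sigma> = p'" using h(8,9) c1 c2 by simp_all
    have u1: "hcomp C (id2 C (id1 C y)) \<tau> = \<tau>" using conjunct2[OF hcomp_unit[OF h(10)]] h(11,6) by simp
    have u2: "hcomp C \<tau> (id2 C (id1 C x)) = \<tau>" using conjunct1[OF hcomp_unit[OF h(10)]] h(11,5) by simp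
    have d: "dom1 C (src2 C \<sigma>) = x" "cod1 C (src2 C \<sigma>) = y" using s h(3,4) by simp_all
    have g: "(vcomp C \<tau> \<sigma>, vcomp C \<sigma> \<tau>) \<in> tr_gen C x y" unfolding tr_gen_def
      using h(7,10) s h(11,12) d by (intro CollectI exI[of _ \<sigma>] exI[of _ \<tau>]) simp
    have z': "z = ((src2 C \<sigma>, vcomp C \<tau> \<sigma>), (src2 C \<tau>, vcomp C \<sigma> \<tau>))" 
      unfolding z u1 u2 s h(11) ..
    show "z \<in> ?R" unfolding z' using g h(7,10) s h(11,12) d
      by (intro CollectI exI[of _ \<sigma>] exI[of _ \<tau>]) simp
  qed
next
  have ix: "dom1 C (id1 C x) = x" and iy: "dom1 C (id1 C y) = y" using id1_props assms by auto
  show "?R \<subseteq> ?L"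
  proof
    fix z assume "z \<in> ?R"
    then obtain \<sigma> \<tau> where z: "z = ((src2 C \<sigma>, vcomp C \<tau> \<sigma>), (src2 C \<tau>, vcomp C \<sigma> \<tau>))"
      and h: "\<sigma> \<in> Cell C" "\<tau> \<in> Cell C" "tgt2 C \<sigma> = src2 C \<tau>" "tgt2 C \<tau> = src2 C \<sigma>"
        "dom1 C (src2 C \<sigma>) = x" "cod1 C (src2 C \<sigma>) = y" by blast
    have pa: "src2 C \<sigma> \<in> Arr C" "src2 C \<tau> \<in> Arr C" using cell_props h(1,2) by auto
    have d: "dom1 C (src2 C \<tau>) = x" "cod1 C (src2 C \<tau>) = y" using cell_props[OF h(1)] h(3,5,6) by metis+
    have u1: "hcomp C (id2 C (id1 C y)) \<tau> = \<tau>" using conjunct2[OF hcomp_unit[OF h(2)]] d by simp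
    have u2: "hcomp C \<tau> (id2 C (id1 C x)) = \<tau>" using conjunct1[OF hcomp_unit[OF h(2)]] d by simp
    have c1: "comp1 C (src2 C \<sigma>) (id1 C x) = src2 C \<sigma>" using comp1_id[OF pa(1)] h(5) by simp
    have c2: "comp1 C (id1 C y) (src2 C \<tau>) = src2 C \<tau>" using comp1_id[OF pa(2)] d by simp
    have w: "z = ((src2 C \<sigma>, vcomp C (hcomp C (id2 C (id1 C y)) \<tau>) \<sigma>), (src2 C \<tau>, vcomp C \<sigma> (hcomp C \<tau> (id2 C (id1 C x)))))"
      unfolding z u1 u2 ..
    show "z \<in> ?L" unfolding hor_gen_def ix iy w
      using pa h(1,2,3,4,5,6) d c1 c2
      by (intro CollectI exI[of _ "src2 C \<sigma>"] exI[of _ "src2 C \<tau>"] exI[of _ \<sigma>] exI[of _ \<tau>]) simp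
  qed
qed

lemma hor_gen_sub: assumes "x \<in> Ob C" "y \<in> Ob C"
  shows "hor_gen C (id1 C x) (id1 C y) \<subseteq> hor_pairs C (id1 C x) (id1 C y) \<times> hor_pairs C (id1 C x) (id1 C y)"
proof
  fix z assume "z \<in> hor_gen C (id1 C x) (id1 C y)"
  then obtain \<sigma> \<tau> where z: "z = ((src2 C \<sigma>, vcomp C \<tau> \<sigma>), (src2 C \<tau>, vcomp C \<sigma> \<tau>))"
    and g: "(vcomp C \<tau> \<sigma>, vcomp C \<sigma> \<tau>) \<in> tr_gen C x y"
    and h: "\<sigma> \<in> Cell C" "\<tau> \<in> Cell C" "tgt2 C \<sigma> = src2 C \<tau>" "tgt2 C \<tau> = src2 C \<sigma>"
    unfolding hor_gen_char[OF assms] by blast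
  have "vcomp C \<tau> \<sigma> \<in> endo2 C x y" "vcomp C \<sigma> \<tau> \<in> endo2 C x y" using g tr_gen_sub by auto
  moreover have "src2 C (vcomp C \<tau> \<sigma>) = src2 C \<sigma>" "src2 C (vcomp C \<sigma> \<tau>) = src2 C \<tau>"
    using vcomp_props h by auto
  ultimately show "z \<in> hor_pairs C (id1 C x) (id1 C y) \<times> hor_pairs C (id1 C x) (id1 C y)"
    using z hor_pairs_iff[OF assms] by auto
qed

lemma horrel_equiv: assumes "x \<in> Ob C" "y \<in> Ob C"
  shows "equiv (hor_pairs C (id1 C x) (id1 C y)) (horrel C (id1 C x) (id1 C y))"
  unfolding horrel_def by (rule equiv_gen_equiv[OF hor_gen_sub[OF assms]])

lemma tr_to_hor: assumes "x \<in> Ob C" "y \<in> Ob C" "(\<sigma>, \<sigma>') \<in> trrel C x y"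
  shows "((src2 C \<sigma>, \<sigma>), (src2 C \<sigma>', \<sigma>')) \<in> horrel C (id1 C x) (id1 C y)"
proof -
  have "((\<lambda>s. (src2 C s, s)) \<sigma>, (\<lambda>s. (src2 C s, s)) \<sigma>') \<in> horrel C (id1 C x) (id1 C y)"
  proof (rule equiv_gen_map[OF tr_gen_sub horrel_equiv[OF assms(1,2)]])
    show "(src2 C a, a) \<in> hor_pairs C (id1 C x) (id1 C y)" if "a \<in> endo2 C x y" for a
      using that hor_pairs_iff[OF assms(1,2)] by auto
  next
    fix a b assume ab: "(a, b) \<in> tr_gen C x y"
    then obtain f g where z: "a = vcomp C g f" "b = vcomp C f g" and h: "f \<in> Cell C" "g \<in> Cell C"
      "tgt2 C f = src2 C g" "tgt2 C g = src2 C f" "dom1 C (src2 C f) = x" "cod1 C (src2 C f) = y"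
      unfolding tr_gen_def by blast
    have "src2 C a = src2 C f" "src2 C b = src2 C g" using vcomp_props h z by auto
    hence "((src2 C a, a), (src2 C b, b)) \<in> hor_gen C (id1 C x) (id1 C y)"
      unfolding hor_gen_char[OF assms(1,2)] using ab z h by blast
    thus "((src2 C a, a), (src2 C b, b)) \<in> horrel C (id1 C x) (id1 C y)"
      unfolding horrel_def using equiv_gen_sub by blast
  next
    show "(\<sigma>, \<sigma>') \<in> equiv_gen (endo2 C x y) (tr_gen C x y)" using assms(3) unfolding trrel_def by simp
  qed
  thus ?thesis by simp
qed

lemma hor_to_tr: assumes "x \<in> Ob C" "y \<in> Ob C" "(a, b) \<in> horrel C (id1 C x) (id1 C y)"
  shows "(snd a, snd b) \<in> trrel C x y"
proof (rule equiv_gen_map[OF hor_gen_sub[OF assms(1,2)] trrel_equiv])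
  show "snd c \<in> endo2 C x y" if "c \<in> hor_pairs C (id1 C x) (id1 C y)" for c
    using that hor_pairs_iff[OF assms(1,2)] by (cases c) auto
next
  fix c d assume "(c, d) \<in> hor_gen C (id1 C x) (id1 C y)"
  then obtain \<sigma> \<tau> where "c = (src2 C \<sigma>, vcomp C \<tau> \<sigma>)" "d = (src2 C \<tau>, vcomp C \<sigma> \<tau>)"
    and g: "(vcomp C \<tau> \<sigma>, vcomp C \<sigma> \<tau>) \<in> tr_gen C x y"
    unfolding hor_gen_char[OF assms(1,2)] by blast
  thus "(snd c, snd d) \<in> trrel C x y" unfolding trrel_def using equiv_gen_sub by auto
next
  show "(a, b) \<in> equiv_gen (hor_pairs C (id1 C x) (id1 C y)) (hor_gen C (id1 C x) (id1 C y))"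
    using assms(3) unfolding horrel_def by simp
qed

lemma hcomp_endo: assumes s: "\<sigma> \<in> endo2 C x y" and t: "\<tau> \<in> endo2 C y z"
  shows "hcomp C \<tau> \<sigma> \<in> endo2 C x z"
proof -
  have s': "\<sigma> \<in> Cell C" "src2 C \<sigma> = tgt2 C \<sigma>" "dom1 C (src2 C \<sigma>) = x" "cod1 C (src2 C \<sigma>) = y"
    using s by (auto simp: endo2_iff)
  have t': "\<tau> \<in> Cell C" "src2 C \<tau> = tgt2 C \<tau>" "dom1 C (src2 C \<tau>) = y" "cod1 C (src2 C \<tau>) = z"
    using t by (auto simp: endo2_iff)
  have h: "hcomp C \<tau> \<sigma> \<in> Cell C" "src2 C (hcomp C \<tau> \<sigma>) = comp1 C (src2 C \<tau>) (src2 C \<sigma>)"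
        "tgt2 C (hcomp C \<tau> \<sigma>) = comp1 C (tgt2 C \<tau>) (tgt2 C \<sigma>)"
    using hcomp_props[OF s'(1) t'(1)] s'(4) t'(3) by auto
  have "dom1 C (comp1 C (src2 C \<tau>) (src2 C \<sigma>)) = x" "cod1 C (comp1 C (src2 C \<tau>) (src2 C \<sigma>)) = z"
    using comp1_props[of "src2 C \<sigma>" "src2 C \<tau>"] cell_props[OF s'(1)] cell_props[OF t'(1)] s'(3,4) t'(3,4)
    by auto
  thus ?thesis using h s'(2) t'(2) by (simp add: endo2_iff)
qed

lemma gen_to_trrel: "p \<in> tr_gen C x y \<Longrightarrow> p \<in> trrel C x y"
  unfolding trrel_def using equiv_gen_sub by blast

lemma cong_left: assumes r: "(\<sigma>, \<sigma>') \<in> trrel C x y" and t: "\<tau> \<in> endo2 C y z"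
  shows "(hcomp C \<tau> \<sigma>, hcomp C \<tau> \<sigma>') \<in> trrel C x z"
proof (rule equiv_gen_map[OF tr_gen_sub trrel_equiv, where h = "hcomp C \<tau>"])
  show "hcomp C \<tau> a \<in> endo2 C x z" if "a \<in> endo2 C x y" for a using hcomp_endo[OF that t] .
next
  show "(\<sigma>, \<sigma>') \<in> equiv_gen (endo2 C x y) (tr_gen C x y)" using r unfolding trrel_def by simp
next
  fix u v assume "(u, v) \<in> tr_gen C x y"
  then obtain f g where uv: "u = vcomp C g f" "v = vcomp C f g" and h: "f \<in> Cell C" "g \<in> Cell C"
      "tgt2 C f = src2 C g" "tgt2 C g = src2 C f" "dom1 C (src2 C f) = x" "cod1 C (src2 C f) = y"
    unfolding tr_gen_def by blast
  have t': "\<tau> \<in> Cell C" "src2 C \<tau> = tgt2 C \<tau>" "dom1 C (src2 C \<tau>) = y" "cod1 C (src2 C \<tau>) = z"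
    using t by (auto simp: endo2_iff)
  define tt where "tt = src2 C \<tau>"
  define a where "a = src2 C f"
  define b where "b = src2 C g"
  have ta: "tt \<in> Arr C" "a \<in> Arr C" "b \<in> Arr C" using cell_props t'(1) h(1,2) tt_def a_def b_def by auto
  have it: "id2 C tt \<in> Cell C" "src2 C (id2 C tt) = tt" "tgt2 C (id2 C tt) = tt" using id2_props[OF ta(1)] by auto
  have cb: "cod1 C b = y" using cell_props[OF h(1)] h(3,6) a_def b_def by metis
  define F where "F = hcomp C (id2 C tt) f"
  define G where "G = hcomp C \<tau> g"
  have F: "F \<in> Cell C" "src2 C F = comp1 C tt a" "tgt2 C F = comp1 C tt b"
    using hcomp_props[OF h(1) it(1)] it t'(3) h(3,6) tt_def a_def b_def F_def by auto
  have G: "G \<in> Cell C" "src2 C G = comp1 C tt b" "tgt2 C G = comp1 C tt a"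
    using hcomp_props[OF h(2) t'(1)] cb t'(2,3) h(4) tt_def a_def b_def G_def by auto
  have dF: "dom1 C (src2 C F) = x" "cod1 C (src2 C F) = z"
    using F(2) comp1_props[OF ta(2) ta(1)] h(5,6) t'(3,4) a_def tt_def by auto
  have e1: "vcomp C G F = hcomp C \<tau> u"
  proof -
    have "hcomp C (vcomp C \<tau> (id2 C tt)) (vcomp C g f) = vcomp C (hcomp C \<tau> g) (hcomp C (id2 C tt) f)"
      by (rule interchange[OF h(1) h(2) it(1) t'(1) h(3)]) (use it h t' tt_def in auto)
    moreover have "vcomp C \<tau> (id2 C tt) = \<tau>" using vcomp_id[OF t'(1)] tt_def by auto
    ultimately show ?thesis using uv F_def G_def by simp
  qed
  have e2: "vcomp C F G = hcomp C \<tau> v"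
  proof -
    have "hcomp C (vcomp C (id2 C tt) \<tau>) (vcomp C f g) = vcomp C (hcomp C (id2 C tt) f) (hcomp C \<tau> g)"
      by (rule interchange[OF h(2) h(1) t'(1) it(1) h(4)]) (use it h t' tt_def cb b_def in auto)
    moreover have "vcomp C (id2 C tt) \<tau> = \<tau>" using vcomp_id[OF t'(1)] t'(2) tt_def by auto
    ultimately show ?thesis using uv F_def G_def by simp
  qed
  have "(vcomp C G F, vcomp C F G) \<in> tr_gen C x z" unfolding tr_gen_def
    using F G dF by (intro CollectI exI[of _ F] exI[of _ G]) simp
  thus "(hcomp C \<tau> u, hcomp C \<tau> v) \<in> trrel C x z" using e1 e2 gen_to_trrel by simp
qed

lemma cong_right: assumes r: "(\<tau>, \<tau>') \<in> trrel C y z" and s: "\<sigma> \<in> endo2 C x y"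
  shows "(hcomp C \<tau> \<sigma>, hcomp C \<tau>' \<sigma>) \<in> trrel C x z"
proof (rule equiv_gen_map[OF tr_gen_sub trrel_equiv, where h = "\<lambda>t. hcomp C t \<sigma>"])
  show "hcomp C a \<sigma> \<in> endo2 C x z" if "a \<in> endo2 C y z" for a using hcomp_endo[OF s that] .
next
  show "(\<tau>, \<tau>') \<in> equiv_gen (endo2 C y z) (tr_gen C y z)" using r unfolding trrel_def by simp
next
  fix u v assume "(u, v) \<in> tr_gen C y z"
  then obtain f g where uv: "u = vcomp C g f" "v = vcomp C f g" and h: "f \<in> Cell C" "g \<in> Cell C"
      "tgt2 C f = src2 C g" "tgt2 C g = src2 C f" "dom1 C (src2 C f) = y" "cod1 C (src2 C f) = z"
    unfolding tr_gen_def by blast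
  have s': "\<sigma> \<in> Cell C" "src2 C \<sigma> = tgt2 C \<sigma>" "dom1 C (src2 C \<sigma>) = x" "cod1 C (src2 C \<sigma>) = y"
    using s by (auto simp: endo2_iff)
  define ss where "ss = src2 C \<sigma>"
  define a where "a = src2 C f"
  define b where "b = src2 C g"
  have ta: "ss \<in> Arr C" "a \<in> Arr C" "b \<in> Arr C" using cell_props s'(1) h(1,2) ss_def a_def b_def by auto
  have is': "id2 C ss \<in> Cell C" "src2 C (id2 C ss) = ss" "tgt2 C (id2 C ss) = ss" using id2_props[OF ta(1)] by auto
  have db: "dom1 C b = y" using cell_props[OF h(1)] h(3,5) a_def b_def by metis
  define F where "F = hcomp C f (id2 C ss)"
  define G where "G = hcomp C g \<sigma>"
  have F: "F \<in> Cell C" "src2 C F = comp1 C a ss" "tgt2 C F = comp1 C b ss"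
    using hcomp_props[OF is'(1) h(1)] is' s'(4) h(3,5) ss_def a_def b_def F_def by auto
  have G: "G \<in> Cell C" "src2 C G = comp1 C b ss" "tgt2 C G = comp1 C a ss"
    using hcomp_props[OF s'(1) h(2)] db s'(2,4) h(4) ss_def a_def b_def G_def by auto
  have dF: "dom1 C (src2 C F) = x" "cod1 C (src2 C F) = z"
    using F(2) comp1_props[OF ta(1) ta(2)] h(5,6) s'(3,4) a_def ss_def by auto
  have e1: "vcomp C G F = hcomp C u \<sigma>"
  proof -
    have "hcomp C (vcomp C g f) (vcomp C \<sigma> (id2 C ss)) = vcomp C (hcomp C g \<sigma>) (hcomp C f (id2 C ss))"
      by (rule interchange[OF is'(1) s'(1) h(1) h(2)]) (use is' h s' ss_def in auto)
    moreover have "vcomp C \<sigma> (id2 C ss) = \<sigma>" using vcomp_id[OF s'(1)] ss_def by auto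
    ultimately show ?thesis using uv F_def G_def by simp
  qed
  have e2: "vcomp C F G = hcomp C v \<sigma>"
  proof -
    have "hcomp C (vcomp C f g) (vcomp C (id2 C ss) \<sigma>) = vcomp C (hcomp C f (id2 C ss)) (hcomp C g \<sigma>)"
      by (rule interchange[OF s'(1) is'(1) h(2) h(1)]) (use is' h s' ss_def db b_def in auto)
    moreover have "vcomp C (id2 C ss) \<sigma> = \<sigma>" using vcomp_id[OF s'(1)] s'(2) ss_def by auto
    ultimately show ?thesis using uv F_def G_def by simp
  qed
  have "(vcomp C G F, vcomp C F G) \<in> tr_gen C x z" unfolding tr_gen_def
    using F G dF by (intro CollectI exI[of _ F] exI[of _ G]) simp
  thus "(hcomp C u \<sigma>, hcomp C v \<sigma>) \<in> trrel C x z" using e1 e2 gen_to_trrel by simp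
qed

lemma i_rep_eq: "i_rep C x y \<sigma> = horrel C (id1 C x) (id1 C y) `` {(src2 C \<sigma>, \<sigma>)}"
  by (simp add: i_rep_def hor_class_def)

lemma c3: assumes "x \<in> Ob C" "y \<in> Ob C" "(\<sigma>, \<sigma>') \<in> trrel C x y"
  shows "i_rep C x y \<sigma> = i_rep C x y \<sigma>'"
  unfolding i_rep_eq using equiv_class_eq[OF horrel_equiv[OF assms(1,2)] tr_to_hor[OF assms]] .

lemma some_in_class: assumes "x \<in> Ob C" "y \<in> Ob C" "\<sigma> \<in> endo2 C x y"
  shows "(\<sigma>, SOME s. s \<in> trrel C x y `` {\<sigma>}) \<in> trrel C x y"
proof -
  have "\<sigma> \<in> trrel C x y `` {\<sigma>}" using equiv_class_self[OF trrel_equiv assms(3)] .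
  hence "(SOME s. s \<in> trrel C x y `` {\<sigma>}) \<in> trrel C x y `` {\<sigma>}" by (rule someI)
  thus ?thesis by simp
qed

lemma c4: assumes "x \<in> Ob C" "y \<in> Ob C" "\<sigma> \<in> endo2 C x y"
  shows "i_mor C x y (tr_class C x y \<sigma>) = i_rep C x y \<sigma>"
  unfolding i_mor_def tr_class_def using c3[OF assms(1,2) some_in_class[OF assms]] by simp

lemma c5: assumes "x \<in> Ob C" "y \<in> Ob C" "S \<in> tr_hom C x y"
  shows "i_mor C x y S \<in> hor_hom C (i_obj C x) (i_obj C y)"
proof -
  obtain \<sigma> where s: "\<sigma> \<in> endo2 C x y" "S = trrel C x y `` {\<sigma>}"
    using assms(3) unfolding tr_hom_def by (auto elim: quotientE)
  have "i_mor C x y S = i_rep C x y \<sigma>" using c4[OF assms(1,2) s(1)] s(2) by (simp add: tr_class_def)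
  moreover have "(src2 C \<sigma>, \<sigma>) \<in> hor_pairs C (id1 C x) (id1 C y)" using hor_pairs_iff[OF assms(1,2)] s(1) by simp
  ultimately show ?thesis unfolding i_rep_eq hor_hom_def i_obj_def by (simp add: quotientI)
qed

lemma c7: assumes x: "x \<in> Ob C" and y: "y \<in> Ob C" and z: "z \<in> Ob C"
  and S: "S \<in> tr_hom C x y" and T: "T \<in> tr_hom C y z"
  shows "i_mor C x z (tr_comp C x y z T S) =
        hor_comp C (i_obj C x) (i_obj C y) (i_obj C z) (i_mor C y z T) (i_mor C x y S)"
proof -
  obtain \<sigma> where s: "\<sigma> \<in> endo2 C x y" "S = trrel C x y `` {\<sigma>}"
    using S unfolding tr_hom_def by (auto elim: quotientE)
  obtain \<tau> where t: "\<tau> \<in> endo2 C y z" "T = trrel C y z `` {\<tau>}"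
    using T unfolding tr_hom_def by (auto elim: quotientE)
  define \<sigma>0 where "\<sigma>0 = (SOME s. s \<in> S)"
  define \<tau>0 where "\<tau>0 = (SOME s. s \<in> T)"
  have s0: "(\<sigma>, \<sigma>0) \<in> trrel C x y" using some_in_class[OF x y s(1)] s(2) \<sigma>0_def by simp
  have t0: "(\<tau>, \<tau>0) \<in> trrel C y z" using some_in_class[OF y z t(1)] t(2) \<tau>0_def by simp
  have s0e: "\<sigma>0 \<in> endo2 C x y" using s0 trrel_equiv[of x y] unfolding equiv_def by blast
  have t0e: "\<tau>0 \<in> endo2 C y z" using t0 trrel_equiv[of y z] unfolding equiv_def by blast
  have L: "i_mor C x z (tr_comp C x y z T S) = i_rep C x z (hcomp C \<tau>0 \<sigma>0)"
    unfolding tr_comp_def \<sigma>0_def[symmetric] \<tau>0_def[symmetric]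
    using c4[OF x z hcomp_endo[OF s0e t0e]] .
  have iT: "i_mor C y z T = horrel C (id1 C y) (id1 C z) `` {(src2 C \<tau>0, \<tau>0)}"
    unfolding i_mor_def \<tau>0_def[symmetric] i_rep_eq ..
  have iS: "i_mor C x y S = horrel C (id1 C x) (id1 C y) `` {(src2 C \<sigma>0, \<sigma>0)}"
    unfolding i_mor_def \<sigma>0_def[symmetric] i_rep_eq ..
  define b where "b = (SOME b. b \<in> i_mor C y z T)"
  define a where "a = (SOME a. a \<in> i_mor C x y S)"
  have tp: "(src2 C \<tau>0, \<tau>0) \<in> hor_pairs C (id1 C y) (id1 C z)" using hor_pairs_iff[OF y z] t0e by simp
  have sp: "(src2 C \<sigma>0, \<sigma>0) \<in> hor_pairs C (id1 C x) (id1 C y)" using hor_pairs_iff[OF x y] s0e by simp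
  have "b \<in> i_mor C y z T" unfolding b_def iT
    by (rule someI, rule equiv_class_self[OF horrel_equiv[OF y z] tp])
  hence bh: "((src2 C \<tau>0, \<tau>0), b) \<in> horrel C (id1 C y) (id1 C z)" unfolding iT by simp
  have "a \<in> i_mor C x y S" unfolding a_def iS
    by (rule someI, rule equiv_class_self[OF horrel_equiv[OF x y] sp])
  hence ah: "((src2 C \<sigma>0, \<sigma>0), a) \<in> horrel C (id1 C x) (id1 C y)" unfolding iS by simp
  obtain q \<tau>1 where bq: "b = (q, \<tau>1)" by (cases b)
  obtain p \<sigma>1 where ap: "a = (p, \<sigma>1)" by (cases a)
  have "b \<in> hor_pairs C (id1 C y) (id1 C z)" using bh horrel_equiv[OF y z] unfolding equiv_def by blast
  hence t1: "\<tau>1 \<in> endo2 C y z" "q = src2 C \<tau>1" using hor_pairs_iff[OF y z] bq by auto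
  have "a \<in> hor_pairs C (id1 C x) (id1 C y)" using ah horrel_equiv[OF x y] unfolding equiv_def by blast
  hence s1: "\<sigma>1 \<in> endo2 C x y" "p = src2 C \<sigma>1" using hor_pairs_iff[OF x y] ap by auto
  have tt: "(\<tau>0, \<tau>1) \<in> trrel C y z" using hor_to_tr[OF y z bh] bq by simp
  have ss: "(\<sigma>0, \<sigma>1) \<in> trrel C x y" using hor_to_tr[OF x y ah] ap by simp
  have s1': "\<sigma>1 \<in> Cell C" "src2 C \<sigma>1 = tgt2 C \<sigma>1" "dom1 C (src2 C \<sigma>1) = x" "cod1 C (src2 C \<sigma>1) = y"
    using s1 by (auto simp: endo2_iff)
  have t1': "\<tau>1 \<in> Cell C" "src2 C \<tau>1 = tgt2 C \<tau>1" "dom1 C (src2 C \<tau>1) = y" "cod1 C (src2 C \<tau>1) = z"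
    using t1 by (auto simp: endo2_iff)
  have pa: "p \<in> Arr C" "q \<in> Arr C" using cell_props s1' t1' s1 t1 by auto
  have ip: "id2 C p \<in> Cell C" "src2 C (id2 C p) = p" "tgt2 C (id2 C p) = p" using id2_props[OF pa(1)] by auto
  have iq: "id2 C q \<in> Cell C" "src2 C (id2 C q) = q" "tgt2 C (id2 C q) = q" using id2_props[OF pa(2)] by auto
  have ic: "hcomp C (vcomp C \<tau>1 (id2 C q)) (vcomp C (id2 C p) \<sigma>1) =
      vcomp C (hcomp C \<tau>1 (id2 C p)) (hcomp C (id2 C q) \<sigma>1)"
    by (rule interchange[OF s1'(1) ip(1) iq(1) t1'(1)]) (use ip iq s1 s1' t1 t1' in auto)
  have v1: "vcomp C \<tau>1 (id2 C q) = \<tau>1" using vcomp_id[OF t1'(1)] t1(2) by simp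
  have v2: "vcomp C (id2 C p) \<sigma>1 = \<sigma>1" using vcomp_id[OF s1'(1)] s1(2) s1'(2) by simp
  have srcq: "src2 C (hcomp C \<tau>1 \<sigma>1) = comp1 C q p"
    using hcomp_props[OF s1'(1) t1'(1)] s1'(4) t1'(3) s1(2) t1(2) by simp
  have R: "hor_comp C (i_obj C x) (i_obj C y) (i_obj C z) (i_mor C y z T) (i_mor C x y S)
      = i_rep C x z (hcomp C \<tau>1 \<sigma>1)"
    unfolding hor_comp_def b_def[symmetric] a_def[symmetric] bq ap Let_def i_rep_def i_obj_def
    using ic v1 v2 srcq by simp
  have r1: "(hcomp C \<tau>0 \<sigma>0, hcomp C \<tau>1 \<sigma>0) \<in> trrel C x z" by (rule cong_right[OF tt s0e])
  have r2: "(hcomp C \<tau>1 \<sigma>0, hcomp C \<tau>1 \<sigma>1) \<in> trrel C x z" by (rule cong_left[OF ss t1(1)])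
  have "(hcomp C \<tau>0 \<sigma>0, hcomp C \<tau>1 \<sigma>1) \<in> trrel C x z"
    using r1 r2 trrel_equiv[of x z] unfolding equiv_def by (meson transD)
  thus ?thesis using L R c3[OF x z] by simp
qed

lemma c8: assumes x: "x \<in> Ob C" and y: "y \<in> Ob C"
  shows "bij_betw (i_mor C x y) (tr_hom C x y) (hor_hom C (i_obj C x) (i_obj C y))"
  unfolding bij_betw_def
proof
  show "inj_on (i_mor C x y) (tr_hom C x y)"
  proof (rule inj_onI)
    fix S S' assume S: "S \<in> tr_hom C x y" and S': "S' \<in> tr_hom C x y" and eq: "i_mor C x y S = i_mor C x y S'"
    obtain \<sigma> where s: "\<sigma> \<in> endo2 C x y" "S = trrel C x y `` {\<sigma>}"
      using S unfolding tr_hom_def by (auto elim: quotientE)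
    obtain \<sigma>' where s': "\<sigma>' \<in> endo2 C x y" "S' = trrel C x y `` {\<sigma>'}"
      using S' unfolding tr_hom_def by (auto elim: quotientE)
    have "i_rep C x y \<sigma> = i_rep C x y \<sigma>'"
      using eq c4[OF x y s(1)] c4[OF x y s'(1)] s(2) s'(2) by (simp add: tr_class_def)
    hence "((src2 C \<sigma>, \<sigma>), (src2 C \<sigma>', \<sigma>')) \<in> horrel C (id1 C x) (id1 C y)"
      unfolding i_rep_eq using eq_equiv_class_iff[OF horrel_equiv[OF x y]] hor_pairs_iff[OF x y] s(1) s'(1)
      by simp
    hence "(\<sigma>, \<sigma>') \<in> trrel C x y" using hor_to_tr[OF x y] by fastforce
    thus "S = S'" using s(2) s'(2) equiv_class_eq[OF trrel_equiv] by simp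
  qed
next
  show "i_mor C x y ` tr_hom C x y = hor_hom C (i_obj C x) (i_obj C y)"
  proof
    show "i_mor C x y ` tr_hom C x y \<subseteq> hor_hom C (i_obj C x) (i_obj C y)" using c5[OF x y] by blast
  next
    show "hor_hom C (i_obj C x) (i_obj C y) \<subseteq> i_mor C x y ` tr_hom C x y"
    proof
      fix B assume "B \<in> hor_hom C (i_obj C x) (i_obj C y)"
      then obtain pa where pa: "pa \<in> hor_pairs C (id1 C x) (id1 C y)" "B = horrel C (id1 C x) (id1 C y) `` {pa}"
        unfolding hor_hom_def i_obj_def by (auto elim: quotientE)
      obtain p \<sigma> where pq: "pa = (p, \<sigma>)" by (cases pa)
      have s: "\<sigma> \<in> endo2 C x y" "p = src2 C \<sigma>" using pa(1) pq hor_pairs_iff[OF x y] by auto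
      have "B = i_mor C x y (tr_class C x y \<sigma>)" using c4[OF x y s(1)] pa(2) pq s(2) i_rep_eq by simp
      moreover have "tr_class C x y \<sigma> \<in> tr_hom C x y" unfolding tr_class_def tr_hom_def
        using s(1) by (rule quotientI)
      ultimately show "B \<in> i_mor C x y ` tr_hom C x y" by blast
    qed
  qed
qed

end

theorem mainTheorem2:
  fixes C :: "('o, 'a, 'b) two_cat"
  assumes "strict_2cat C"
  shows
    \<comment> \<open>well-definedness: i sends objects to objects, representatives to valid pairs,
        and equivalent representatives to the same class\<close>
    "(\<forall>x\<in>Ob C. hor_obj C (i_obj C x)) \<and>
     (\<forall>x\<in>Ob C. \<forall>y\<in>Ob C. \<forall>\<sigma>\<in>endo2 C x y.
        (src2 C \<sigma>, \<sigma>) \<in> hor_pairs C (i_obj C x) (i_obj C y)) \<and>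
     (\<forall>x\<in>Ob C. \<forall>y\<in>Ob C. \<forall>\<sigma> \<sigma>'. (\<sigma>, \<sigma>') \<in> trrel C x y \<longrightarrow> i_rep C x y \<sigma> = i_rep C x y \<sigma>') \<and>
     (\<forall>x\<in>Ob C. \<forall>y\<in>Ob C. \<forall>\<sigma>\<in>endo2 C x y. i_mor C x y (tr_class C x y \<sigma>) = i_rep C x y \<sigma>) \<and>
     (\<forall>x\<in>Ob C. \<forall>y\<in>Ob C. \<forall>S\<in>tr_hom C x y.
        i_mor C x y S \<in> hor_hom C (i_obj C x) (i_obj C y)) \<and>
     \<comment> \<open>functoriality\<close>
     (\<forall>x\<in>Ob C. i_mor C x x (tr_id C x) = hor_id C (i_obj C x)) \<and>
     (\<forall>x\<in>Ob C. \<forall>y\<in>Ob C. \<forall>z\<in>Ob C. \<forall>S\<in>tr_hom C x y. \<forall>T\<in>tr_hom C y z.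
        i_mor C x z (tr_comp C x y z T S) =
        hor_comp C (i_obj C x) (i_obj C y) (i_obj C z) (i_mor C y z T) (i_mor C x y S)) \<and>
     \<comment> \<open>full and faithful\<close>
     (\<forall>x\<in>Ob C. \<forall>y\<in>Ob C.
        bij_betw (i_mor C x y) (tr_hom C x y) (hor_hom C (i_obj C x) (i_obj C y)))"
proof -
  have c1: "\<forall>x\<in>Ob C. hor_obj C (i_obj C x)"
    using id1_props[OF assms] unfolding hor_obj_def i_obj_def by auto
  have c2: "\<forall>x\<in>Ob C. \<forall>y\<in>Ob C. \<forall>\<sigma>\<in>endo2 C x y.
        (src2 C \<sigma>, \<sigma>) \<in> hor_pairs C (i_obj C x) (i_obj C y)"
    using hor_pairs_iff[OF assms] unfolding i_obj_def by auto
  have c6: "\<forall>x\<in>Ob C. i_mor C x x (tr_id C x) = hor_id C (i_obj C x)"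
  proof
    fix x assume x: "x \<in> Ob C"
    have ia: "id1 C x \<in> Arr C" "dom1 C (id1 C x) = x" "cod1 C (id1 C x) = x" using id1_props[OF assms x] by auto
    have e: "id2 C (id1 C x) \<in> endo2 C x x" using id2_props[OF assms ia(1)] ia by (simp add: endo2_iff[OF assms])
    have "src2 C (id2 C (id1 C x)) = id1 C x" using id2_props[OF assms ia(1)] by simp
    thus "i_mor C x x (tr_id C x) = hor_id C (i_obj C x)"
      unfolding tr_id_def c4[OF assms x x e] i_rep_def hor_id_def i_obj_def ia(2) by simp
  qed
  show ?thesis
    apply (intro conjI)
    subgoal by (rule c1)
    subgoal by (rule c2)
    subgoal using c3[OF assms] by blast
    subgoal using c4[OF assms] by blast
    subgoal using c5[OF assms] by blast
    subgoal by (rule c6)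
    subgoal by (intro ballI, rule c7[OF assms]) assumption+
    subgoal using c8[OF assms] by blast
    done
qed

end
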